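(* Fix $\epsilon>0$ and define \[U_1:=\left\{(a,b)\in\bigl([0,1/2)\times[1/2,1)\bigr)\cup\bigl([1/2,1)\times[0,1/2)\bigr):\ a+b<\tfrac34\right\},\] \[U_2:=\left\{(a,b)\in[0,1/2)\times[0,1):\ \tfrac34+\epsilon<a+b<\tfrac54\right\},\] $U:=U_1\cup U_2$ and $S_\epsilon:=\pi(U)\subset\mathbb{T}^2$. Let $\theta_x,\theta_y,\theta_z\in S_\epsilon$ satisfy $2\theta_y=\theta_x+\theta_z$, and write $d:=\frac{\pi^{-1}(\theta_z)-\pi^{-1}(\theta_x)}{2}\in\mathbb{R}^2$. Then \[2\psi(\theta_y)\ge\psi(\theta_x)+\psi(\theta_z)+1/2\quad\text{or}\quad \psi(\theta_y)=\psi(\theta_x)+(d_1+d_2).\]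
   Context: $\mathbb{T}^2:=(\mathbb{R}/\mathbb{Z})^2$. $\pi:\mathbb{R}^2\to\mathbb{T}^2$, $x\mapsto x+\mathbb{Z}^2$, and for $\theta\in\mathbb{T}^2$, $\pi^{-1}(\theta)$ denotes the unique $x\in[0,1)^2$ with $\pi(x)=\theta$. The sum map $\psi:\mathbb{T}^2\to[0,2)$ is $\psi(\theta)=\pi^{-1}(\theta)_1+\pi^{-1}(\theta)_2$. *)

theory Defs
  imports "HOL-Analysis.Analysis"
begin

definition unit_sq :: "(real \<times> real) set" where
  "unit_sq = {p. 0 \<le> fst p \<and> fst p < 1 \<and> 0 \<le> snd p \<and> snd p < 1}"

text \<open>The torus T^2 = R^2 / Z^2, modelled by its canonical representatives.\<close>
typedef torus = unit_sq
  by (rule exI[of _ "(0,0)"]) (simp add: unit_sq_def)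

definition tpi :: "real \<times> real \<Rightarrow> torus" where
  "tpi x = Abs_torus (frac (fst x), frac (snd x))"

definition tpi_inv :: "torus \<Rightarrow> real \<times> real" where
  "tpi_inv \<theta> = (THE x. x \<in> unit_sq \<and> tpi x = \<theta>)"

instantiation torus :: plus
begin
definition plus_torus :: "torus \<Rightarrow> torus \<Rightarrow> torus" where
  "plus_torus \<theta> \<eta> = tpi (tpi_inv \<theta> + tpi_inv \<eta>)"
instance ..
end

definition psi :: "torus \<Rightarrow> real" where
  "psi \<theta> = fst (tpi_inv \<theta>) + snd (tpi_inv \<theta>)"

definition U1 :: "(real \<times> real) set" where
  "U1 = {(a,b). ((0 \<le> a \<and> a < 1/2 \<and> 1/2 \<le> b \<and> b < 1) \<or> (1/2 \<le> a \<and> a < 1 \<and> 0 \<le> b \<and> b < 1/2))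
               \<and> a + b < 3/4}"

definition U2 :: "real \<Rightarrow> (real \<times> real) set" where
  "U2 \<epsilon> = {(a,b). 0 \<le> a \<and> a < 1/2 \<and> 0 \<le> b \<and> b < 1 \<and> 3/4 + \<epsilon> < a + b \<and> a + b < 5/4}"

definition S_eps :: "real \<Rightarrow> torus set" where
  "S_eps \<epsilon> = tpi ` (U1 \<union> U2 \<epsilon>)"

end

theory Submission
  imports Defs
begin

lemma frac_in_sq: "(frac a, frac b) \<in> unit_sq"
  by (simp add: unit_sq_def frac_lt_1)

lemma tpi_sq: "u \<in> unit_sq \<Longrightarrow> tpi u = Abs_torus u"
  by (cases u) (auto simp: tpi_def unit_sq_def frac_eq)

lemma tpi_inv_tpi: assumes "u \<in> unit_sq" shows "tpi_inv (tpi u) = u"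
  unfolding tpi_inv_def
proof (rule the_equality)
  show "u \<in> unit_sq \<and> tpi u = tpi u" using assms by simp
  fix x assume "x \<in> unit_sq \<and> tpi x = tpi u"
  then show "x = u" using assms by (metis tpi_sq Abs_torus_inject)
qed

lemma tpi_eq: assumes "tpi a = tpi b"
  shows "\<exists>(k1::int) (k2::int). fst a = fst b + k1 \<and> snd a = snd b + k2"
proof -
  have "(frac (fst a), frac (snd a)) = (frac (fst b), frac (snd b))"
    using assms frac_in_sq by (simp add: tpi_def Abs_torus_inject)
  then have "frac (fst a) = frac (fst b)" "frac (snd a) = frac (snd b)" by auto
  then show ?thesis unfolding frac_def
    by (metis add.commute diff_add_cancel diff_diff_eq2 diff_eq_eq of_int_diff)
qed

lemma U_sq: "U1 \<union> U2 e \<subseteq> unit_sq"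
  by (auto simp: U1_def U2_def unit_sq_def)

lemma Sdest: assumes "\<theta> \<in> S_eps e"
  obtains u where "u \<in> U1 \<union> U2 e" "\<theta> = tpi u" "tpi_inv \<theta> = u"
  using assms U_sq tpi_inv_tpi unfolding S_eps_def by blast

lemma Ucases:
  assumes "(a,b) \<in> U1 \<union> U2 e"
  obtains "0 \<le> a" "a < 1/2" "1/2 \<le> b" "b < 1" "a + b < 3/4"
   | "1/2 \<le> a" "a < 1" "0 \<le> b" "b < 1/2" "a + b < 3/4"
   | "0 \<le> a" "a < 1/2" "0 \<le> b" "b < 1" "3/4 + e < a + b" "a + b < 5/4"
  using assms unfolding U1_def U2_def by auto

lemma arith_core:
  fixes x1 x2 y1 y2 z1 z2 e k1 k2 :: real
  assumes "e > 0" "(x1,x2) \<in> U1 \<union> U2 e" "(y1,y2) \<in> U1 \<union> U2 e" "(z1,z2) \<in> U1 \<union> U2 e"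
    and "2*y1 = x1 + z1 + k1" "2*y2 = x2 + z2 + k2"
    and "k1 \<in> {-1,0,1}" "k2 \<in> {-1,0,1}"
  shows "k1 + k2 \<ge> 0"
  using assms(2)
proof (rule Ucases)
qed (use assms(3) in \<open>rule Ucases\<close>; use assms(4) in \<open>rule Ucases\<close>; use assms(1,5-8) in auto)+

theorem proposition4p6:
  fixes \<epsilon> :: real and \<theta>x \<theta>y \<theta>z :: torus
  assumes "\<epsilon> > 0"
    and "\<theta>x \<in> S_eps \<epsilon>" and "\<theta>y \<in> S_eps \<epsilon>" and "\<theta>z \<in> S_eps \<epsilon>"
    and "\<theta>y + \<theta>y = \<theta>x + \<theta>z"
  defines "d \<equiv> (1/2) *\<^sub>R (tpi_inv \<theta>z - tpi_inv \<theta>x)"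
  shows "2 * psi \<theta>y \<ge> psi \<theta>x + psi \<theta>z + 1/2
         \<or> psi \<theta>y = psi \<theta>x + (fst d + snd d)"
proof -
  obtain x where x: "x \<in> U1 \<union> U2 \<epsilon>" "\<theta>x = tpi x" "tpi_inv \<theta>x = x" using assms(2) Sdest by blast
  obtain y where y: "y \<in> U1 \<union> U2 \<epsilon>" "\<theta>y = tpi y" "tpi_inv \<theta>y = y" using assms(3) Sdest by blast
  obtain z where z: "z \<in> U1 \<union> U2 \<epsilon>" "\<theta>z = tpi z" "tpi_inv \<theta>z = z" using assms(4) Sdest by blast
  have "tpi (y + y) = tpi (x + z)" using assms(5) x y z by (simp add: plus_torus_def)
  then obtain k1 k2 :: int where k: "fst (y+y) = fst (x+z) + k1" "snd (y+y) = snd (x+z) + k2"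
    using tpi_eq by blast
  obtain x1 x2 y1 y2 z1 z2 where e: "x = (x1,x2)" "y = (y1,y2)" "z = (z1,z2)"
    by (cases x, cases y, cases z) auto
  have k': "2*y1 = x1 + z1 + k1" "2*y2 = x2 + z2 + k2" using k e by auto
  have b: "0 \<le> x1" "x1 < 1" "0 \<le> y1" "y1 < 1" "0 \<le> z1" "z1 < 1"
    "0 \<le> x2" "x2 < 1" "0 \<le> y2" "y2 < 1" "0 \<le> z2" "z2 < 1"
    using x y z e U_sq[of \<epsilon>] by (auto simp: unit_sq_def)
  have "k1 \<ge> -1" "k1 \<le> 1" "k2 \<ge> -1" "k2 \<le> 1" using b k' by linarith+
  then have "k1 = -1 \<or> k1 = 0 \<or> k1 = 1" "k2 = -1 \<or> k2 = 0 \<or> k2 = 1" by linarith+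
  then have kk: "real_of_int k1 \<in> {-1,0,1}" "real_of_int k2 \<in> {-1,0,1}" by auto
  have "real_of_int k1 + real_of_int k2 \<ge> 0"
    using arith_core[OF assms(1) _ _ _ k'] kk x y z e by auto
  then have "k1 + k2 \<ge> 0" by linarith
  then have disj: "k1 + k2 = 0 \<or> k1 + k2 \<ge> 1" by linarith
  have P: "psi \<theta>x = x1 + x2" "psi \<theta>y = y1 + y2" "psi \<theta>z = z1 + z2"
    "fst d = (z1 - x1)/2" "snd d = (z2 - x2)/2"
    using x y z e by (auto simp: psi_def d_def)
  from disj show ?thesis
  proof
    assume "k1 + k2 = 0"
    then have "real_of_int k1 + k2 = 0" by (metis of_int_0 of_int_add)
    then show ?thesis unfolding P using k' by (intro disjI2) (simp add: field_simps)
  next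
    assume "k1 + k2 \<ge> 1"
    then have "real_of_int k1 + k2 \<ge> 1" by (metis of_int_1 of_int_add of_int_le_iff)
    then show ?thesis unfolding P using k' by (intro disjI1) (simp add: field_simps)
  qed
qed

end
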